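(* Under the setting in the context, let $z^\star\in H$ satisfy $a(z^\star,v)=b(v)$ for all $v\in H$ and $\operatorname{dist}(z^\star,V_k)\le\hat\epsilon_k$ for all $k=0,\dots,n$, and let $z_{\mathrm{MS}}$ be any solution of (MS). Then $f(P_{V_n}z^\star)\le\gamma^2\epsilon_n^2$ and $f(z_{\mathrm{MS}})\le\gamma^2\epsilon_n^2$. Moreover, writing $P_{V_n}z^\star-z_{\mathrm{MS}}=\sum_{j=1}^n\beta_jv_j^*$ with $\beta_j=\langle v_j^*,P_{V_n}z^\star-z_{\mathrm{MS}}\rangle$, one has $\sum_{j=1}^n\sigma_j^2\beta_j^2\le4\gamma^2\epsilon_n^2$.
   Context: $H$ is a real Hilbert space, $a:H\times H\to\mathbb R$ bilinear, $b:H\to\mathbb R$ linear. $V_0\subset\dots\subset V_n\subset H$ are subspaces with $\dim V_k=k$ and orthonormal basis $\{v_1,\dots,v_n\}$ of $V_n$ with $V_k=\operatorname{span}\{v_1,\dots,v_k\}$; $P_{V_n}$ is the orthogonal projector onto $V_n$. $Z_m$ is a subspace of dimension $m\ge n$ with orthonormal basis $\{z_1,\dots,z_m\}$. Each $a(\cdot,z_j)$ is continuous with Riesz representer $r_j$, i.e. $a(v,z_j)=\langle r_j,v\rangle$ for all $v$. $G\in\mathbb R^{m\times n}$, $G_{ij}=\langle r_i,v_j\rangle$, has SVD $G=U\Lambda X^T$ with $U,X=(x_{ij})$ orthogonal and singular values $\sigma_1\ge\dots\ge\sigma_n\ge0$ on the diagonal of $\Lambda$. Set $v_j^*=\sum_{i=1}^n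 x_{ij}v_i$ ($j=1,\dots,n$). Given positive $\hat\epsilon_0,\dots,\hat\epsilon_n$, problem (MS) is: minimize $f(v)=\sum_{j=1}^m(b(z_j)-a(v,z_j))^2$ over $v\in V_n$ subject to $\operatorname{dist}(v,V_k)\le\hat\epsilon_k$, $k=0,\dots,n$. $\epsilon_n=\operatorname{dist}(z^\star,V_n)$ and $\gamma=\sup\{(\sum_{j=1}^m\langle r_j,v\rangle^2)^{1/2}: v\in V_n^\perp,\|v\|=1\}$. *)

theory Defs
  imports "HOL-Analysis.Analysis"
begin

definition orth_proj :: "'h::real_inner set \<Rightarrow> 'h \<Rightarrow> 'h" where
  "orth_proj S x = (THE p. p \<in> S \<and> (\<forall>w\<in>S. inner (x - p) w = 0))"

definition orthonormal_fam :: "(nat \<Rightarrow> 'h::real_inner) \<Rightarrow> nat \<Rightarrow> bool" where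
  "orthonormal_fam e N \<longleftrightarrow> (\<forall>i\<in>{1..N}. \<forall>j\<in>{1..N}. inner (e i) (e j) = (if i = j then 1 else 0))"

definition Vsp :: "(nat \<Rightarrow> 'h::real_inner) \<Rightarrow> nat \<Rightarrow> 'h set" where
  "Vsp v k = span (v ` {1..k})"

definition orth_mat :: "(nat \<Rightarrow> nat \<Rightarrow> real) \<Rightarrow> nat \<Rightarrow> bool" where
  "orth_mat Q N \<longleftrightarrow> (\<forall>i\<in>{1..N}. \<forall>j\<in>{1..N}. (\<Sum>k=1..N. Q k i * Q k j) = (if i = j then 1 else 0))"

definition ms_f :: "('h \<Rightarrow> 'h \<Rightarrow> real) \<Rightarrow> ('h \<Rightarrow> real) \<Rightarrow> (nat \<Rightarrow> 'h) \<Rightarrow> nat \<Rightarrow> 'h \<Rightarrow> real" where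
  "ms_f a b z m w = (\<Sum>j=1..m. (b (z j) - a w (z j))\<^sup>2)"

definition ms_feasible :: "(nat \<Rightarrow> 'h::real_inner) \<Rightarrow> nat \<Rightarrow> (nat \<Rightarrow> real) \<Rightarrow> 'h \<Rightarrow> bool" where
  "ms_feasible v n eps w \<longleftrightarrow> w \<in> Vsp v n \<and> (\<forall>k\<in>{0..n}. infdist w (Vsp v k) \<le> eps k)"

definition ms_solution :: "('h::real_inner \<Rightarrow> 'h \<Rightarrow> real) \<Rightarrow> ('h \<Rightarrow> real) \<Rightarrow> (nat \<Rightarrow> 'h) \<Rightarrow> nat
    \<Rightarrow> (nat \<Rightarrow> 'h) \<Rightarrow> nat \<Rightarrow> (nat \<Rightarrow> real) \<Rightarrow> 'h \<Rightarrow> bool" where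
  "ms_solution a b z m v n eps w \<longleftrightarrow>
     ms_feasible v n eps w \<and> (\<forall>u. ms_feasible v n eps u \<longrightarrow> ms_f a b z m w \<le> ms_f a b z m u)"

definition gamma_const :: "(nat \<Rightarrow> 'h::real_inner) \<Rightarrow> nat \<Rightarrow> 'h set \<Rightarrow> real" where
  "gamma_const r m Vn = Sup {sqrt (\<Sum>j=1..m. (inner (r j) w)\<^sup>2) | w. w \<in> orthogonal_comp Vn \<and> norm w = 1}"

end

theory Submission
  imports Defs
begin
lemma proj_char:
  fixes S :: "'h::real_inner set"
  assumes S: "subspace S" and p: "p \<in> S" and orth: "\<forall>w\<in>S. inner (x - p) w = 0"
  shows "orth_proj S x = p" "infdist x S = norm (x - p)"
proof -
  show "orth_proj S x = p"
    unfolding orth_proj_def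
  proof (rule the_equality)
    show "p \<in> S \<and> (\<forall>w\<in>S. inner (x - p) w = 0)" using p orth by blast
  next
    fix q assume q: "q \<in> S \<and> (\<forall>w\<in>S. inner (x - q) w = 0)"
    have pq: "p - q \<in> S" using subspace_diff[OF S p] q by blast
    have "inner (p - q) (p - q) = inner (x - q) (p - q) - inner (x - p) (p - q)"
      by (simp add: inner_diff_left)
    also have "\<dots> = 0" using q orth pq by simp
    finally show "q = p" by simp
  qed
next
  have ne: "S \<noteq> {}" using p by blast
  show "infdist x S = norm (x - p)"
  proof (rule antisym)
    show "infdist x S \<le> norm (x - p)" using infdist_le[OF p, of x] by (simp add: dist_norm)
  next
    show "norm (x - p) \<le> infdist x S"
      unfolding infdist_notempty[OF ne]
    proof (rule cINF_greatest[OF ne])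
      fix y assume y: "y \<in> S"
      have py: "p - y \<in> S" using subspace_diff[OF S p y] .
      have "(dist x y)\<^sup>2 = (norm ((x - p) + (p - y)))\<^sup>2" by (simp add: dist_norm)
      also have "\<dots> = (norm (x - p))\<^sup>2 + (norm (p - y))\<^sup>2"
        using orth py by (intro norm_add_Pythagorean) (simp add: orthogonal_def)
      finally have "(norm (x - p))\<^sup>2 \<le> (dist x y)\<^sup>2" by simp
      then show "norm (x - p) \<le> dist x y"
        using power2_le_imp_le by fastforce
    qed
  qed
qed

lemma orthonormal_fam_mono: "orthonormal_fam v n \<Longrightarrow> k \<le> n \<Longrightarrow> orthonormal_fam v k"
  unfolding orthonormal_fam_def by auto

definition Pk :: "(nat \<Rightarrow> 'h::real_inner) \<Rightarrow> nat \<Rightarrow> 'h \<Rightarrow> 'h" where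
  "Pk v k x = (\<Sum>i=1..k. inner (v i) x *\<^sub>R v i)"

lemma Pk_in: "Pk v k x \<in> Vsp v k"
  unfolding Pk_def Vsp_def
  by (intro span_sum span_scale span_base) auto

lemma inner_Pk_v:
  assumes "orthonormal_fam v k" "j \<in> {1..k}"
  shows "inner (Pk v k x) (v j) = inner (v j) x"
proof -
  have "inner (Pk v k x) (v j) = (\<Sum>i=1..k. inner (v i) x * (if i = j then 1 else 0))"
    unfolding Pk_def inner_sum_left using assms
    by (intro sum.cong) (auto simp: orthonormal_fam_def)
  also have "\<dots> = inner (v j) x" using assms(2) by (simp add: if_distrib cong: if_cong)
  finally show ?thesis .
qed

lemma Pk_expand:
  assumes on: "orthonormal_fam v k" and w: "w \<in> Vsp v k"
  shows "w = Pk v k w"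
  using w unfolding Vsp_def
proof (induction rule: span_induct)
  case (step x)
  then obtain j where j: "j \<in> {1..k}" "x = v j" by auto
  have "Pk v k x = (\<Sum>i=1..k. (if i = j then v i else 0))"
    unfolding Pk_def using j on by (intro sum.cong) (auto simp: orthonormal_fam_def)
  also have "\<dots> = v j" using j by (simp add: sum.delta)
  finally show ?case using j by simp
next
  case base
  have a: "Pk v k (x + y) = Pk v k x + Pk v k y" for x y
    unfolding Pk_def by (simp add: inner_add_right scaleR_add_left sum.distrib)
  have c: "Pk v k (c *\<^sub>R x) = c *\<^sub>R Pk v k x" for c x
    unfolding Pk_def by (simp add: scaleR_sum_right)
  have z: "Pk v k 0 = 0" unfolding Pk_def by simp
  show ?case unfolding subspace_def using a c z by (auto simp: Pk_def[symmetric])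
qed

lemma Pk_orth:
  assumes on: "orthonormal_fam v k" and w: "w \<in> Vsp v k"
  shows "inner (x - Pk v k x) w = 0"
proof -
  have "inner (x - Pk v k x) w = inner (x - Pk v k x) (Pk v k w)"
    using Pk_expand[OF on w] by simp
  also have "\<dots> = (\<Sum>i=1..k. inner (v i) w * inner (x - Pk v k x) (v i))"
    unfolding Pk_def inner_sum_right by simp
  also have "\<dots> = 0"
  proof (intro sum.neutral ballI)
    fix i assume i: "i \<in> {1..k}"
    have "inner (Pk v k x) (v i) = inner x (v i)"
      using inner_Pk_v[OF on i, of x] by (simp add: inner_commute)
    then have "inner (x - Pk v k x) (v i) = 0"
      by (simp add: inner_diff_left)
    then show "inner (v i) w * inner (x - Pk v k x) (v i) = 0" by simp
  qed
  finally show ?thesis .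
qed

lemma Vsp_subspace: "subspace (Vsp v k)"
  unfolding Vsp_def by simp

lemma proj_Vsp:
  assumes "orthonormal_fam v k"
  shows "orth_proj (Vsp v k) x = Pk v k x" "infdist x (Vsp v k) = norm (x - Pk v k x)"
  using proj_char[OF Vsp_subspace Pk_in, of v k x] Pk_orth[OF assms] by auto

lemma gamma_bound:
  fixes r :: "nat \<Rightarrow> 'h::real_inner"
  assumes w: "w \<in> orthogonal_comp Vn"
  shows "(\<Sum>j=1..m. (inner (r j) w)\<^sup>2) \<le> (gamma_const r m Vn)\<^sup>2 * (norm w)\<^sup>2"
proof (cases "w = 0")
  case True then show ?thesis by simp
next
  case False
  let ?A = "{sqrt (\<Sum>j=1..m. (inner (r j) w)\<^sup>2) | w. w \<in> orthogonal_comp Vn \<and> norm w = 1}"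
  define u where "u = w /\<^sub>R norm w"
  have nu: "norm u = 1" using False by (simp add: u_def)
  have uo: "u \<in> orthogonal_comp Vn" using w unfolding u_def orthogonal_comp_def
    by (auto simp: orthogonal_def)
  have bdd: "bdd_above ?A"
  proof (rule bdd_aboveI)
    fix x assume "x \<in> ?A"
    then obtain y where y: "x = sqrt (\<Sum>j=1..m. (inner (r j) y)\<^sup>2)" "norm y = 1" by auto
    have "(\<Sum>j=1..m. (inner (r j) y)\<^sup>2) \<le> (\<Sum>j=1..m. (norm (r j))\<^sup>2)"
    proof (rule sum_mono)
      fix j
      have "\<bar>inner (r j) y\<bar> \<le> norm (r j)" using Cauchy_Schwarz_ineq2[of "r j" y] y(2) by simp
      then show "(inner (r j) y)\<^sup>2 \<le> (norm (r j))\<^sup>2"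
        by (metis abs_ge_zero power2_abs power_mono)
    qed
    then show "x \<le> sqrt (\<Sum>j=1..m. (norm (r j))\<^sup>2)" using y(1) by simp
  qed
  have mem: "sqrt (\<Sum>j=1..m. (inner (r j) u)\<^sup>2) \<in> ?A" using nu uo by blast
  have le: "sqrt (\<Sum>j=1..m. (inner (r j) u)\<^sup>2) \<le> gamma_const r m Vn"
    unfolding gamma_const_def using cSup_upper[OF mem bdd] .
  have "(\<Sum>j=1..m. (inner (r j) u)\<^sup>2) = (sqrt (\<Sum>j=1..m. (inner (r j) u)\<^sup>2))\<^sup>2"
    by (simp add: sum_nonneg)
  also have "\<dots> \<le> (gamma_const r m Vn)\<^sup>2"
    using le by (intro power_mono) (auto intro: sum_nonneg)
  finally have g: "(\<Sum>j=1..m. (inner (r j) u)\<^sup>2) \<le> (gamma_const r m Vn)\<^sup>2" .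
  have wu: "w = norm w *\<^sub>R u" using False by (simp add: u_def)
  have "(\<Sum>j=1..m. (inner (r j) w)\<^sup>2) = (norm w)\<^sup>2 * (\<Sum>j=1..m. (inner (r j) u)\<^sup>2)"
    by (subst wu) (simp add: power_mult_distrib sum_distrib_left)
  also have "\<dots> \<le> (norm w)\<^sup>2 * (gamma_const r m Vn)\<^sup>2"
    using g by (intro mult_left_mono) auto
  finally show ?thesis by (simp add: mult.commute)
qed

lemma sq_identity:
  assumes U: "orth_mat U m" and nm: "n \<le> m"
  shows "(\<Sum>l=1..m. (\<Sum>k=1..n. U l k * y k)\<^sup>2) = (\<Sum>k=1..n. (y k)\<^sup>2)"
proof -
  have "(\<Sum>l=1..m. (\<Sum>k=1..n. U l k * y k)\<^sup>2)
      = (\<Sum>l=1..m. \<Sum>k=1..n. \<Sum>k'=1..n. U l k * U l k' * (y k * y k'))"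
    by (simp add: power2_eq_square sum_product mult_ac)
  also have "\<dots> = (\<Sum>k=1..n. \<Sum>l=1..m. \<Sum>k'=1..n. U l k * U l k' * (y k * y k'))"
    by (rule sum.swap)
  also have "\<dots> = (\<Sum>k=1..n. \<Sum>k'=1..n. \<Sum>l=1..m. U l k * U l k' * (y k * y k'))"
    by (rule sum.cong[OF refl], rule sum.swap)
  also have "\<dots> = (\<Sum>k=1..n. \<Sum>k'=1..n. (\<Sum>l=1..m. U l k * U l k') * (y k * y k'))"
    by (simp add: sum_distrib_right)
  also have "\<dots> = (\<Sum>k=1..n. \<Sum>k'=1..n. (if k = k' then y k * y k' else 0))"
    using U nm unfolding orth_mat_def by (intro sum.cong refl) auto
  also have "\<dots> = (\<Sum>k=1..n. (y k)\<^sup>2)"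
    by (simp add: sum.delta power2_eq_square)
  finally show ?thesis .
qed

theorem mainTheorem3:
  fixes a :: "'h::{real_inner,complete_space} \<Rightarrow> 'h \<Rightarrow> real"
    and b :: "'h \<Rightarrow> real"
    and v z r :: "nat \<Rightarrow> 'h"
    and n m :: nat
    and G U X :: "nat \<Rightarrow> nat \<Rightarrow> real"
    and \<sigma> epshat :: "nat \<Rightarrow> real"
    and zstar zMS :: 'h
  assumes a_bilinear: "bilinear a"
    and b_linear: "linear b"
    and v_on: "orthonormal_fam v n"
    and mn: "n \<le> m"
    and z_on: "orthonormal_fam z m"
    and a_cont: "\<forall>j\<in>{1..m}. continuous_on UNIV (\<lambda>w. a w (z j))"
    and riesz: "\<forall>j\<in>{1..m}. \<forall>w. a w (z j) = inner (r j) w"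
    and G_def: "\<forall>i\<in>{1..m}. \<forall>j\<in>{1..n}. G i j = inner (r i) (v j)"
    and U_orth: "orth_mat U m"
    and X_orth: "orth_mat X n"
    and svd: "\<forall>i\<in>{1..m}. \<forall>j\<in>{1..n}. G i j = (\<Sum>k=1..n. U i k * \<sigma> k * X j k)"
    and \<sigma>_mono: "\<forall>i\<in>{1..n}. \<forall>j\<in>{1..n}. i \<le> j \<longrightarrow> \<sigma> j \<le> \<sigma> i"
    and \<sigma>_nonneg: "\<forall>j\<in>{1..n}. 0 \<le> \<sigma> j"
    and epshat_pos: "\<forall>k\<in>{0..n}. 0 < epshat k"
    and zstar_sol: "\<forall>w. a zstar w = b w"
    and zstar_dist: "\<forall>k\<in>{0..n}. infdist zstar (Vsp v k) \<le> epshat k"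
    and zMS_sol: "ms_solution a b z m v n epshat zMS"
  shows "ms_f a b z m (orth_proj (Vsp v n) zstar)
           \<le> (gamma_const r m (Vsp v n))\<^sup>2 * (infdist zstar (Vsp v n))\<^sup>2
       \<and> ms_f a b z m zMS \<le> (gamma_const r m (Vsp v n))\<^sup>2 * (infdist zstar (Vsp v n))\<^sup>2
       \<and> (\<Sum>j=1..n. (\<sigma> j)\<^sup>2 *
            (inner (\<Sum>i=1..n. X i j *\<^sub>R v i) (orth_proj (Vsp v n) zstar - zMS))\<^sup>2)
           \<le> 4 * (gamma_const r m (Vsp v n))\<^sup>2 * (infdist zstar (Vsp v n))\<^sup>2"
proof -
  have on_k: "orthonormal_fam v k" if "k \<le> n" for k using orthonormal_fam_mono[OF v_on that] .
  define P where "P = Pk v n zstar"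
  define g where "g = gamma_const r m (Vsp v n)"
  define e where "e = infdist zstar (Vsp v n)"
  have Pdef: "orth_proj (Vsp v n) zstar = P" and eP: "e = norm (zstar - P)"
    using proj_Vsp[OF v_on, of zstar] by (auto simp: P_def e_def)
  have fform: "ms_f a b z m w = (\<Sum>j=1..m. (inner (r j) (zstar - w))\<^sup>2)" for w
    unfolding ms_f_def
  proof (rule sum.cong[OF refl])
    fix j assume j: "j \<in> {1..m}"
    have "b (z j) = inner (r j) zstar" using zstar_sol riesz j by metis
    moreover have "a w (z j) = inner (r j) w" using riesz j by blast
    ultimately show "(b (z j) - a w (z j))\<^sup>2 = (inner (r j) (zstar - w))\<^sup>2"
      by (simp add: inner_diff_right)
  qed
  have perp: "zstar - P \<in> orthogonal_comp (Vsp v n)"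
    using Pk_orth[OF v_on] unfolding orthogonal_comp_def orthogonal_def P_def
    by (auto simp: inner_commute)
  have fP: "ms_f a b z m P \<le> g\<^sup>2 * e\<^sup>2"
    unfolding fform g_def eP using gamma_bound[OF perp, of r m] by simp
  have feasP: "ms_feasible v n epshat P"
    unfolding ms_feasible_def
  proof (intro conjI ballI)
    show "P \<in> Vsp v n" unfolding P_def by (rule Pk_in)
  next
    fix k assume k: "k \<in> {0..n}"
    then have kn: "k \<le> n" by simp
    define Q where "Q = Pk v k zstar"
    have Qin: "Q \<in> Vsp v k" unfolding Q_def by (rule Pk_in)
    have sub: "Vsp v k \<subseteq> Vsp v n" unfolding Vsp_def using kn
      by (intro span_mono image_mono) auto
    have PQ: "P - Q \<in> Vsp v n"
      using subspace_diff[OF Vsp_subspace, of P v n Q] Qin sub Pk_in[of v n zstar]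
      unfolding P_def by blast
    have "(norm (zstar - Q))\<^sup>2 = (norm ((zstar - P) + (P - Q)))\<^sup>2" by simp
    also have "\<dots> = (norm (zstar - P))\<^sup>2 + (norm (P - Q))\<^sup>2"
      using perp PQ unfolding orthogonal_comp_def
      by (intro norm_add_Pythagorean) (auto simp: orthogonal_def inner_commute)
    finally have "(norm (P - Q))\<^sup>2 \<le> (norm (zstar - Q))\<^sup>2" by simp
    then have "norm (P - Q) \<le> norm (zstar - Q)" using power2_le_imp_le by fastforce
    also have "\<dots> = infdist zstar (Vsp v k)"
      using proj_Vsp(2)[OF on_k[OF kn], of zstar] by (simp add: Q_def)
    also have "\<dots> \<le> epshat k" using zstar_dist k by blast
    finally have "norm (P - Q) \<le> epshat k" .
    then show "infdist P (Vsp v k) \<le> epshat k"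
      using infdist_le2[OF Qin] by (simp add: dist_norm)
  qed
  have fMS: "ms_f a b z m zMS \<le> ms_f a b z m P"
    using zMS_sol feasP unfolding ms_solution_def by blast
  have part2: "ms_f a b z m zMS \<le> g\<^sup>2 * e\<^sup>2" using fMS fP by linarith
  define d where "d = P - zMS"
  have zMSin: "zMS \<in> Vsp v n" using zMS_sol unfolding ms_solution_def ms_feasible_def by blast
  have din: "d \<in> Vsp v n" unfolding d_def P_def
    using subspace_diff[OF Vsp_subspace Pk_in zMSin] .
  define c where "c i = inner (v i) d" for i
  have dexp: "d = (\<Sum>i=1..n. c i *\<^sub>R v i)"
    using Pk_expand[OF v_on din] unfolding Pk_def c_def .
  define \<beta> where "\<beta> j = inner (\<Sum>i=1..n. X i j *\<^sub>R v i) d" for j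
  have \<beta>c: "\<beta> j = (\<Sum>i=1..n. X i j * c i)" for j
    unfolding \<beta>_def c_def by (simp add: inner_sum_left)
  have rd: "inner (r l) d = (\<Sum>k=1..n. U l k * (\<sigma> k * \<beta> k))" if l: "l \<in> {1..m}" for l
  proof -
    have "inner (r l) d = (\<Sum>j=1..n. c j * G l j)"
      using G_def l by (subst dexp) (auto simp: inner_sum_right intro!: sum.cong)
    also have "\<dots> = (\<Sum>j=1..n. \<Sum>k=1..n. c j * (U l k * \<sigma> k * X j k))"
      using svd l by (auto simp: sum_distrib_left intro!: sum.cong)
    also have "\<dots> = (\<Sum>k=1..n. \<Sum>j=1..n. c j * (U l k * \<sigma> k * X j k))"
      by (rule sum.swap)
    also have "\<dots> = (\<Sum>k=1..n. U l k * (\<sigma> k * \<beta> k))"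
      unfolding \<beta>c by (auto simp: sum_distrib_left mult_ac intro!: sum.cong)
    finally show ?thesis .
  qed
  have lhs: "(\<Sum>j=1..n. (\<sigma> j)\<^sup>2 * (\<beta> j)\<^sup>2) = (\<Sum>l=1..m. (inner (r l) d)\<^sup>2)"
  proof -
    have "(\<Sum>j=1..n. (\<sigma> j)\<^sup>2 * (\<beta> j)\<^sup>2) = (\<Sum>j=1..n. (\<sigma> j * \<beta> j)\<^sup>2)"
      by (simp add: power_mult_distrib)
    also have "\<dots> = (\<Sum>l=1..m. (\<Sum>k=1..n. U l k * (\<sigma> k * \<beta> k))\<^sup>2)"
      using sq_identity[OF U_orth mn, of "\<lambda>k. \<sigma> k * \<beta> k"] by simp
    also have "\<dots> = (\<Sum>l=1..m. (inner (r l) d)\<^sup>2)"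
      using rd by (intro sum.cong) auto
    finally show ?thesis .
  qed
  define A where "A l = inner (r l) (zstar - zMS)" for l
  define B where "B l = - inner (r l) (zstar - P)" for l
  have AB: "inner (r l) d = A l + B l" for l
    unfolding A_def B_def d_def by (simp add: inner_diff_right)
  have e0: "0 \<le> e" unfolding e_def by (rule infdist_nonneg)
  have LA: "L2_set A {1..m} \<le> \<bar>g\<bar> * e"
  proof -
    have "L2_set A {1..m} = sqrt (ms_f a b z m zMS)"
      unfolding L2_set_def fform A_def ..
    also have "\<dots> \<le> sqrt (g\<^sup>2 * e\<^sup>2)" using part2 by simp
    also have "\<dots> = \<bar>g\<bar> * e" using e0 by (simp add: real_sqrt_mult)
    finally show ?thesis .
  qed
  have LB: "L2_set B {1..m} \<le> \<bar>g\<bar> * e"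
  proof -
    have "L2_set B {1..m} = sqrt (ms_f a b z m P)"
      unfolding L2_set_def fform B_def by simp
    also have "\<dots> \<le> sqrt (g\<^sup>2 * e\<^sup>2)" using fP by simp
    also have "\<dots> = \<bar>g\<bar> * e" using e0 by (simp add: real_sqrt_mult)
    finally show ?thesis .
  qed
  have "L2_set (\<lambda>l. A l + B l) {1..m} \<le> 2 * (\<bar>g\<bar> * e)"
    using L2_set_triangle_ineq[of A B "{1..m}"] LA LB by linarith
  then have sq: "sqrt (\<Sum>l=1..m. (inner (r l) d)\<^sup>2) \<le> 2 * (\<bar>g\<bar> * e)"
    unfolding L2_set_def AB .
  have "(\<Sum>l=1..m. (inner (r l) d)\<^sup>2) = (sqrt (\<Sum>l=1..m. (inner (r l) d)\<^sup>2))\<^sup>2"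
    by (simp add: sum_nonneg)
  also have "\<dots> \<le> (2 * (\<bar>g\<bar> * e))\<^sup>2"
    using sq by (intro power_mono) (auto intro: sum_nonneg)
  also have "\<dots> = 4 * g\<^sup>2 * e\<^sup>2" by (simp add: power_mult_distrib)
  finally have part3: "(\<Sum>j=1..n. (\<sigma> j)\<^sup>2 * (\<beta> j)\<^sup>2) \<le> 4 * g\<^sup>2 * e\<^sup>2" using lhs by simp
  show ?thesis
    using fP part2 part3 unfolding Pdef g_def[symmetric] e_def[symmetric] \<beta>_def d_def by simp
qed

end
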